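(* The variety of Boolean algebras (equivalently, classical propositional logic, with formulas identified up to logical equivalence) has unitary e-generalization type.
   Context: For a variety $\mathsf V$: a symbolic e-generalization problem is a finite multiset $\{t_1,\dots,t_m\}$ of terms (elements of a free algebra $\mathbf F_{\mathsf V}(X)$, $X$ finite, i.e. terms up to the equational theory of $\mathsf V$); a solution is a term $s\in\mathbf F_{\mathsf V}(Y)$ ($Y$ the variables of $s$) such that there are substitutions (homomorphisms between free algebras) $\sigma_k$ with $\sigma_k(s)=t_k$ for all $k$; $s\preceq u$ iff $\sigma(u)=s$ for some substitution $\sigma$. A problem has unitary type if its poset of solutions modulo $\preceq$-equivalence has a minimal complete set (pairwise incomparable elements such that every solution lies above one of them) of cardinality 1, i.e. a least general solution exists. A variety has unitary e-generalization type if every such problem has unitary type. For a logic, e-generalization is taken with respect to logical equivalence of formulas, which for classical logic is the equational theory of Boolean algebras. *)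

theory Defs
  imports Main "HOL-Library.Multiset"
begin

datatype form = Var nat | Bot | Top | Neg form | And form form | Or form form

primrec eval :: "(nat \<Rightarrow> bool) \<Rightarrow> form \<Rightarrow> bool" where
  "eval v (Var x) = v x"
| "eval v Bot = False"
| "eval v Top = True"
| "eval v (Neg f) = (\<not> eval v f)"
| "eval v (And f g) = (eval v f \<and> eval v g)"
| "eval v (Or f g) = (eval v f \<or> eval v g)"

text \<open>Logical equivalence = equality in the free Boolean algebra.\<close>
definition equiv :: "form \<Rightarrow> form \<Rightarrow> bool" where
  "equiv f g \<longleftrightarrow> (\<forall>v. eval v f = eval v g)"

primrec subst :: "(nat \<Rightarrow> form) \<Rightarrow> form \<Rightarrow> form" where
  "subst \<sigma> (Var x) = \<sigma> x"
| "subst \<sigma> Bot = Bot"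
| "subst \<sigma> Top = Top"
| "subst \<sigma> (Neg f) = Neg (subst \<sigma> f)"
| "subst \<sigma> (And f g) = And (subst \<sigma> f) (subst \<sigma> g)"
| "subst \<sigma> (Or f g) = Or (subst \<sigma> f) (subst \<sigma> g)"

definition instance_of :: "form \<Rightarrow> form \<Rightarrow> bool" where
  "instance_of s u \<longleftrightarrow> (\<exists>\<sigma>. equiv (subst \<sigma> u) s)"

definition is_solution :: "form multiset \<Rightarrow> form \<Rightarrow> bool" where
  "is_solution M s \<longleftrightarrow> (\<forall>t \<in># M. \<exists>\<sigma>. equiv (subst \<sigma> s) t)"

definition minimal_complete_set :: "form multiset \<Rightarrow> form set \<Rightarrow> bool" where
  "minimal_complete_set M S \<longleftrightarrow>
     (\<forall>s\<in>S. is_solution M s)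
   \<and> (\<forall>a\<in>S. \<forall>b\<in>S. a \<noteq> b \<longrightarrow> \<not> instance_of a b)
   \<and> (\<forall>u. is_solution M u \<longrightarrow> (\<exists>s\<in>S. instance_of s u))"

definition unitary_type :: "form multiset \<Rightarrow> bool" where
  "unitary_type M \<longleftrightarrow> (\<exists>S. minimal_complete_set M S \<and> card S = 1)"

end

theory Submission
  imports Defs
begin

lemma eval_subst: "eval v (subst \<sigma> f) = eval (\<lambda>y. eval v (\<sigma> y)) f"
  by (induction f) auto

definition cst :: "bool \<Rightarrow> form" where "cst b = (if b then Top else Bot)"

lemma eval_cst[simp]: "eval v (cst b) = b"
  by (simp add: cst_def)

lemma lemA:
  assumes "eval a u" "\<not> eval b u"
  shows "equiv (subst (\<lambda>y. Or (And (Var 0) (cst (a y))) (And (Neg (Var 0)) (cst (b y)))) u) (Var 0)"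
proof -
  have "eval v (subst (\<lambda>y. Or (And (Var 0) (cst (a y))) (And (Neg (Var 0)) (cst (b y)))) u) = v 0" for v
  proof -
    have e: "(\<lambda>y. eval v (Or (And (Var 0) (cst (a y))) (And (Neg (Var 0)) (cst (b y))))) = (if v 0 then a else b)"
      by (auto simp: fun_eq_iff)
    show ?thesis unfolding eval_subst e using assms by auto
  qed
  then show ?thesis by (simp add: equiv_def)
qed

lemma lemB:
  assumes "eval a u"
  shows "equiv (subst (\<lambda>y. cst (a y)) u) Top"
proof -
  have e: "(\<lambda>y. eval v (cst (a y))) = a" for v by auto
  show ?thesis using assms by (simp add: equiv_def eval_subst e)
qed

lemma lemC:
  assumes "\<not> eval a u"
  shows "equiv (subst (\<lambda>y. cst (a y)) u) Bot"
proof -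
  have e: "(\<lambda>y. eval v (cst (a y))) = a" for v by auto
  show ?thesis using assms by (simp add: equiv_def eval_subst e)
qed

theorem theorem5p1:
  shows "\<forall>M :: form multiset. M \<noteq> {#} \<longrightarrow> unitary_type M"
proof (intro allI impI)
  fix M :: "form multiset"
  assume ne: "M \<noteq> {#}"
  then obtain t0 where t0: "t0 \<in># M" by (meson multiset_nonemptyE)
  define T where "T = (\<forall>t\<in>#M. \<forall>v. eval v t)"
  define F where "F = (\<forall>t\<in>#M. \<forall>v. \<not> eval v t)"
  define s where "s = (if T then Top else if F then Bot else Var 0)"
  have sol: "is_solution M s"
    unfolding is_solution_def
  proof
    fix t assume t: "t \<in># M"
    show "\<exists>\<sigma>. equiv (subst \<sigma> s) t"
    proof (cases T)
      case True
      have "equiv (subst Var s) t" using True t by (simp add: s_def T_def equiv_def)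
      then show ?thesis by blast
    next
      case False
      show ?thesis
      proof (cases F)
        case True
        have "equiv (subst Var s) t" using True t False by (simp add: s_def F_def equiv_def)
        then show ?thesis by blast
      next
        case False2: False
        have "equiv (subst (\<lambda>_. t) s) t" using False False2 by (simp add: s_def equiv_def)
        then show ?thesis by blast
      qed
    qed
  qed
  have compl: "instance_of s u" if u: "is_solution M u" for u
  proof -
    have ev: "\<exists>a. eval a u = eval w t" if "t \<in># M" for t w
    proof -
      have "\<exists>\<sigma>. equiv (subst \<sigma> u) t" using u[unfolded is_solution_def] that by (rule bspec)
      then obtain \<sigma> where "equiv (subst \<sigma> u) t" by (elim exE)
      then have "eval w (subst \<sigma> u) = eval w t" by (simp add: equiv_def)
      then have "eval (\<lambda>y. eval w (\<sigma> y)) u = eval w t" by (simp only: eval_subst)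
      then show ?thesis by blast
    qed
    show ?thesis
    proof (cases T)
      case True
      then have "eval (\<lambda>_. True) t0" using t0 by (simp add: T_def)
      moreover obtain a where "eval a u = eval (\<lambda>_. True) t0" using ev[OF t0] by blast
      ultimately have "eval a u" by simp
      then have "equiv (subst (\<lambda>y. cst (a y)) u) s" using lemB True by (simp add: s_def)
      then show ?thesis unfolding instance_of_def by blast
    next
      case False
      then obtain t1 v1 where t1: "t1 \<in># M" "\<not> eval v1 t1" by (auto simp: T_def)
      obtain b where "eval b u = eval v1 t1" using ev[OF t1(1), of v1] by blast
      with t1(2) have b: "\<not> eval b u" by simp
      show ?thesis
      proof (cases F)
        case True
        have "equiv (subst (\<lambda>y. cst (b y)) u) s" using lemC[OF b] True False by (simp add: s_def)
        then show ?thesis unfolding instance_of_def by blast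
      next
        case False2: False
        then obtain t2 v2 where t2: "t2 \<in># M" "eval v2 t2" by (auto simp: F_def)
        obtain a where "eval a u = eval v2 t2" using ev[OF t2(1), of v2] by blast
        with t2(2) have a: "eval a u" by simp
        have "equiv (subst (\<lambda>y. Or (And (Var 0) (cst (a y))) (And (Neg (Var 0)) (cst (b y)))) u) s"
          using lemA[OF a b] False False2 by (simp add: s_def)
        then show ?thesis unfolding instance_of_def by blast
      qed
    qed
  qed
  have "minimal_complete_set M {s}"
    unfolding minimal_complete_set_def using sol compl by auto
  then show "unitary_type M" unfolding unitary_type_def by (intro exI[of _ "{s}"]) auto
qed

end
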